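(* For every edge $S\xrightarrow{i}T$ of $L^{\mathrm{skew}}_{A_{n-1}}(P/Q)$, the numbers $X_{T,S}$ and $Y_{S,T}$ defined below (all of whose denominators are nonzero) are positive rational numbers.
   Context: Fix integers $m\ge n\ge 2$ and weakly decreasing $m$-tuples of nonnegative integers $P=(P_1,\dots,P_m)$ and $Q=(Q_1,\dots,Q_m)$ with $Q_r\le P_r$ for all $r$. The skew shape $P/Q$ is the set of cells $(r,c)$ (row $r$, column $c$, matrix convention) with $Q_r<c\le P_r$; assume no column of $P/Q$ contains more than $n$ cells. $L^{\mathrm{skew}}_{A_{n-1}}(P/Q)$ is the set of semistandard tableaux $T$ of shape $P/Q$ with entries in $\{1,\dots,n\}$ (entries weakly increase left to right along rows and strictly increase top to bottom down columns), partially ordered by $S\le T$ iff $S_{r,c}\ge T_{r,c}$ for every cell $(r,c)$. The Hasse diagram edges are colored: $S\to T$ is a covering iff $S,T$ differ in exactly one cell $(r,c)$ and $S_{r,c}=T_{r,c}+1$; this edge gets color $i:=T_{r,c}\in\{1,\dots,n-1\}$, written $S\xrightarrow{i}T$. GT parallelograms: for $0\le i\le n$ put $C_i:=\{i-(m-1),\dots,i-1,i\}$. To each tableau $T$ associate the integer array $(g_{i,j}(T))_{0\le i\le n,\,j\in C_i}$ defined by $g_{i,i+1-r}(T):=Q_r+|\{c:(r,c)\in P/Q,\ T_{r,c}\le i\}|$ for $1\le r\le m$. (Thus $g_{0,j}=Q_{1-j}$, $g_{n,j}=P_{n+1-j}$, and $\max(g_{i-1,j-1},g_{i+1,j})\le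 g_{i,j}\le\min(g_{i-1,j},g_{i+1,j+1})$ whenever the indices are defined.) One has $S\xrightarrow{i}T$ iff the arrays of $S$ and $T$ agree except at exactly one position $(i,j)$, where $g_{i,j}(T)=g_{i,j}(S)+1$. Edge coefficients: for an edge $S\xrightarrow{i}T$ with differing position $(i,j)$, writing $g_{p,q}:=g_{p,q}(T)$, $$X_{T,S}:=-\frac{\prod_{k\in C_{i+1}}(g_{i,j}-g_{i+1,k}+j-k)}{\prod_{k\in C_i\setminus\{j\}}(g_{i,j}-g_{i,k}+j-k-1)},\qquad Y_{S,T}:=\frac{\prod_{k\in C_{i-1}}(g_{i,j}-g_{i-1,k}+j-k-1)}{\prod_{k\in C_i\setminus\{j\}}(g_{i,j}-g_{i,k}+j-k)}.$$ *)

theory Defs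
  imports Main "HOL.Rat"
begin

definition skew_cells :: "nat \<Rightarrow> (nat \<Rightarrow> nat) \<Rightarrow> (nat \<Rightarrow> nat) \<Rightarrow> (nat \<times> nat) set" where
  "skew_cells m P Q = {(r, c). 1 \<le> r \<and> r \<le> m \<and> Q r < c \<and> c \<le> P r}"

definition weakly_decr :: "nat \<Rightarrow> (nat \<Rightarrow> nat) \<Rightarrow> bool" where
  "weakly_decr m P \<longleftrightarrow> (\<forall>r r'. 1 \<le> r \<and> r \<le> r' \<and> r' \<le> m \<longrightarrow> P r' \<le> P r)"

text \<open>Semistandard tableau of shape P/Q with entries in {1..n}; only values on cells matter.\<close>
definition sstab :: "nat \<Rightarrow> nat \<Rightarrow> (nat \<Rightarrow> nat) \<Rightarrow> (nat \<Rightarrow> nat) \<Rightarrow> (nat \<Rightarrow> nat \<Rightarrow> nat) \<Rightarrow> bool" where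
  "sstab n m P Q T \<longleftrightarrow>
     (\<forall>(r, c) \<in> skew_cells m P Q. 1 \<le> T r c \<and> T r c \<le> n) \<and>
     (\<forall>r c c'. (r, c) \<in> skew_cells m P Q \<and> (r, c') \<in> skew_cells m P Q \<and> c \<le> c' \<longrightarrow> T r c \<le> T r c') \<and>
     (\<forall>r r' c. (r, c) \<in> skew_cells m P Q \<and> (r', c) \<in> skew_cells m P Q \<and> r < r' \<longrightarrow> T r c < T r' c)"

definition skew_edge :: "nat \<Rightarrow> nat \<Rightarrow> (nat \<Rightarrow> nat) \<Rightarrow> (nat \<Rightarrow> nat) \<Rightarrow>
    (nat \<Rightarrow> nat \<Rightarrow> nat) \<Rightarrow> nat \<Rightarrow> (nat \<Rightarrow> nat \<Rightarrow> nat) \<Rightarrow> bool" where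
  "skew_edge n m P Q S i T \<longleftrightarrow> sstab n m P Q S \<and> sstab n m P Q T \<and>
     (\<exists>r c. (r, c) \<in> skew_cells m P Q \<and> S r c = T r c + 1 \<and> T r c = i \<and>
        (\<forall>(r', c') \<in> skew_cells m P Q. (r', c') \<noteq> (r, c) \<longrightarrow> S r' c' = T r' c'))"

definition Cset :: "nat \<Rightarrow> int \<Rightarrow> int set" where
  "Cset m i = {i - (int m - 1) .. i}"

definition gt :: "nat \<Rightarrow> (nat \<Rightarrow> nat) \<Rightarrow> (nat \<Rightarrow> nat) \<Rightarrow> (nat \<Rightarrow> nat \<Rightarrow> nat) \<Rightarrow> int \<Rightarrow> int \<Rightarrow> int" where
  "gt m P Q T i j = (let r = nat (i + 1 - j) in
      int (Q r) + int (card {c. (r, c) \<in> skew_cells m P Q \<and> int (T r c) \<le> i}))"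

definition Xnum :: "nat \<Rightarrow> (nat \<Rightarrow> nat) \<Rightarrow> (nat \<Rightarrow> nat) \<Rightarrow> (nat \<Rightarrow> nat \<Rightarrow> nat) \<Rightarrow> int \<Rightarrow> int \<Rightarrow> rat" where
  "Xnum m P Q T i j = (\<Prod>k\<in>Cset m (i + 1). of_int (gt m P Q T i j - gt m P Q T (i + 1) k + j - k))"

definition Xden :: "nat \<Rightarrow> (nat \<Rightarrow> nat) \<Rightarrow> (nat \<Rightarrow> nat) \<Rightarrow> (nat \<Rightarrow> nat \<Rightarrow> nat) \<Rightarrow> int \<Rightarrow> int \<Rightarrow> rat" where
  "Xden m P Q T i j = (\<Prod>k\<in>Cset m i - {j}. of_int (gt m P Q T i j - gt m P Q T i k + j - k - 1))"

definition Ynum :: "nat \<Rightarrow> (nat \<Rightarrow> nat) \<Rightarrow> (nat \<Rightarrow> nat) \<Rightarrow> (nat \<Rightarrow> nat \<Rightarrow> nat) \<Rightarrow> int \<Rightarrow> int \<Rightarrow> rat" where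
  "Ynum m P Q T i j = (\<Prod>k\<in>Cset m (i - 1). of_int (gt m P Q T i j - gt m P Q T (i - 1) k + j - k - 1))"

definition Yden :: "nat \<Rightarrow> (nat \<Rightarrow> nat) \<Rightarrow> (nat \<Rightarrow> nat) \<Rightarrow> (nat \<Rightarrow> nat \<Rightarrow> nat) \<Rightarrow> int \<Rightarrow> int \<Rightarrow> rat" where
  "Yden m P Q T i j = (\<Prod>k\<in>Cset m i - {j}. of_int (gt m P Q T i j - gt m P Q T i k + j - k))"

text \<open>X_{T,S} and Y_{S,T}, computed from the array of T at position (i,j).\<close>
definition Xcoef :: "nat \<Rightarrow> (nat \<Rightarrow> nat) \<Rightarrow> (nat \<Rightarrow> nat) \<Rightarrow> (nat \<Rightarrow> nat \<Rightarrow> nat) \<Rightarrow> int \<Rightarrow> int \<Rightarrow> rat" where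
  "Xcoef m P Q T i j = - (Xnum m P Q T i j / Xden m P Q T i j)"

definition Ycoef :: "nat \<Rightarrow> (nat \<Rightarrow> nat) \<Rightarrow> (nat \<Rightarrow> nat) \<Rightarrow> (nat \<Rightarrow> nat \<Rightarrow> nat) \<Rightarrow> int \<Rightarrow> int \<Rightarrow> rat" where
  "Ycoef m P Q T i j = Ynum m P Q T i j / Yden m P Q T i j"

end

theory Submission
  imports Defs
begin

definition HH :: "nat \<Rightarrow> (nat \<Rightarrow> nat) \<Rightarrow> (nat \<Rightarrow> nat) \<Rightarrow> (nat \<Rightarrow> nat \<Rightarrow> nat) \<Rightarrow> nat \<Rightarrow> int \<Rightarrow> int" where
  "HH m P Q U r a = int (Q r) + int (card {c. (r, c) \<in> skew_cells m P Q \<and> int (U r c) \<le> a})"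

lemma gt_HH: "gt m P Q U a k = HH m P Q U (nat (a + 1 - k)) a"
  by (simp add: gt_def HH_def Let_def)

lemma fin_row: "finite {c. (r, c) \<in> skew_cells m P Q \<and> X c}"
  by (rule finite_subset[of _ "{..P r}"]) (auto simp: skew_cells_def)

lemma HH_mono: "HH m P Q U r a \<le> HH m P Q U r (a + 1)"
proof -
  have "card {c. (r, c) \<in> skew_cells m P Q \<and> int (U r c) \<le> a}
        \<le> card {c. (r, c) \<in> skew_cells m P Q \<and> int (U r c) \<le> a + 1}"
    by (rule card_mono[OF fin_row]) auto
  thus ?thesis by (simp add: HH_def)
qed

lemma HH_step:
  assumes st: "sstab n m P Q U" and wP: "weakly_decr m P" and wQ: "weakly_decr m Q"
    and r: "1 \<le> r" "r + 1 \<le> m"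
  shows "HH m P Q U (r + 1) (a + 1) \<le> HH m P Q U r a"
proof -
  let ?A = "{c. (r + 1, c) \<in> skew_cells m P Q \<and> int (U (r + 1) c) \<le> a + 1}"
  let ?B = "{c. (r, c) \<in> skew_cells m P Q \<and> int (U r c) \<le> a}"
  have Qle: "Q (r + 1) \<le> Q r" and Ple: "P (r + 1) \<le> P r"
    using wP wQ r unfolding weakly_decr_def by auto
  have col: "\<And>c. (r, c) \<in> skew_cells m P Q \<Longrightarrow> (r + 1, c) \<in> skew_cells m P Q \<Longrightarrow> U r c < U (r + 1) c"
    using st unfolding sstab_def by auto
  have sub: "?A \<subseteq> ?B \<union> {Q (r + 1)<..Q r}"
  proof
    fix c assume c: "c \<in> ?A"
    show "c \<in> ?B \<union> {Q (r + 1)<..Q r}"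
    proof (cases "c \<le> Q r")
      case True thus ?thesis using c by (auto simp: skew_cells_def)
    next
      case False
      hence rc: "(r, c) \<in> skew_cells m P Q" using c r Ple by (auto simp: skew_cells_def)
      have "U r c < U (r + 1) c" using col[OF rc] c by auto
      thus ?thesis using c rc by auto
    qed
  qed
  have "card ?A \<le> card (?B \<union> {Q (r + 1)<..Q r})"
    by (rule card_mono) (use fin_row sub in auto)
  also have "\<dots> \<le> card ?B + card {Q (r + 1)<..Q r}" by (rule card_Un_le)
  finally have "card ?A \<le> card ?B + (Q r - Q (r + 1))" by simp
  thus ?thesis using Qle by (simp add: HH_def)
qed

lemma HH_anti:
  assumes st: "sstab n m P Q U" and wP: "weakly_decr m P" and wQ: "weakly_decr m Q"
    and r1: "1 \<le> r" and rr: "r \<le> r'" and rm: "r' \<le> m"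
  shows "HH m P Q U r' a \<le> HH m P Q U r a"
  using rr rm
proof (induction r' rule: dec_induct)
  case base show ?case by simp
next
  case (step k)
  have "HH m P Q U (Suc k) a \<le> HH m P Q U (k + 1) (a + 1)" using HH_mono by simp
  also have "\<dots> \<le> HH m P Q U k a"
    by (rule HH_step[OF st wP wQ]) (use step r1 in auto)
  finally show ?case using step by simp
qed

lemma prod_sgn:
  fixes f :: "'a \<Rightarrow> int"
  assumes "finite A" "\<forall>a\<in>A. f a \<noteq> 0"
  shows "sgn (prod f A) = (-1) ^ card {a\<in>A. f a < 0}"
  using assms
proof (induction A rule: finite_induct)
  case empty then show ?case by simp
next
  case (insert x F)
  have eq: "{a\<in>insert x F. f a < 0} = (if f x < 0 then insert x {a\<in>F. f a < 0} else {a\<in>F. f a < 0})"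
    by auto
  have fin: "finite {a\<in>F. f a < 0}" using insert by auto
  have "x \<notin> {a\<in>F. f a < 0}" using insert by auto
  have s1: "sgn (prod f (insert x F)) = sgn (f x) * sgn (prod f F)"
    using insert by (simp add: sgn_mult)
  show ?case
  proof (cases "f x < 0")
    case True
    hence "card {a\<in>insert x F. f a < 0} = Suc (card {a\<in>F. f a < 0})"
    proof -
      have "{a\<in>insert x F. f a < 0} = insert x {a\<in>F. f a < 0}" using True by auto
      thus ?thesis using card_insert_disjoint[OF fin \<open>x \<notin> {a\<in>F. f a < 0}\<close>] by simp
    qed
    thus ?thesis using s1 insert True by simp
  next
    case False
    hence "0 < f x" using insert by auto
    moreover have "{a\<in>insert x F. f a < 0} = {a\<in>F. f a < 0}" using False by auto
    ultimately show ?thesis using s1 insert by simp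
  qed
qed

lemma edge_HH:
  assumes "(r0, c0) \<in> skew_cells m P Q" "S r0 c0 = T r0 c0 + 1" "T r0 c0 = i"
    "\<forall>(r', c') \<in> skew_cells m P Q. (r', c') \<noteq> (r0, c0) \<longrightarrow> S r' c' = T r' c'"
  shows "HH m P Q S r a = (if r = r0 \<and> a = int i then HH m P Q T r a - 1 else HH m P Q T r a)"
proof (cases "r = r0 \<and> a = int i")
  case True
  let ?SS = "{c. (r, c) \<in> skew_cells m P Q \<and> int (S r c) \<le> a}"
  have eq: "{c. (r, c) \<in> skew_cells m P Q \<and> int (T r c) \<le> a} = insert c0 ?SS"
    using assms True by force
  have "c0 \<notin> ?SS" using assms True by auto
  hence "card (insert c0 ?SS) = Suc (card ?SS)" using fin_row by (simp add: card_insert_disjoint)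
  thus ?thesis using True eq by (simp add: HH_def)
next
  case False
  have "{c. (r, c) \<in> skew_cells m P Q \<and> int (S r c) \<le> a} = {c. (r, c) \<in> skew_cells m P Q \<and> int (T r c) \<le> a}"
    using assms False by force
  thus ?thesis using False by (simp add: HH_def)
qed

lemma negdiv_pos: "sgn (A::int) = - sgn B \<Longrightarrow> B \<noteq> 0 \<Longrightarrow> (0::rat) < - (of_int A / of_int B)"
  by (auto simp: sgn_if split: if_splits intro: divide_pos_neg divide_neg_pos)

lemma div_pos: "sgn (A::int) = sgn B \<Longrightarrow> B \<noteq> 0 \<Longrightarrow> (0::rat) < of_int A / of_int B"
  by (auto simp: sgn_if split: if_splits intro: divide_pos_pos divide_neg_neg)

theorem lemma6p1:
  fixes m n :: nat and P Q :: "nat \<Rightarrow> nat" and S T :: "nat \<Rightarrow> nat \<Rightarrow> nat"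
    and i :: nat and j :: int
  assumes "2 \<le> n" and "n \<le> m"
    and "weakly_decr m P" and "weakly_decr m Q"
    and "\<forall>r. 1 \<le> r \<and> r \<le> m \<longrightarrow> Q r \<le> P r"
    and "\<forall>c. card {r. (r, c) \<in> skew_cells m P Q} \<le> n"
    and "skew_edge n m P Q S i T"
    and "j \<in> Cset m (int i)"
    and "gt m P Q T (int i) j \<noteq> gt m P Q S (int i) j"
  shows "Xden m P Q T (int i) j \<noteq> 0 \<and> Yden m P Q T (int i) j \<noteq> 0 \<and>
         Xcoef m P Q T (int i) j > 0 \<and> Ycoef m P Q T (int i) j > 0"
proof -
  note wP = assms(3) and wQ = assms(4)
  have stS: "sstab n m P Q S" and stT: "sstab n m P Q T" using assms(7) by (auto simp: skew_edge_def)
  obtain r0 c0 where e: "(r0, c0) \<in> skew_cells m P Q" "S r0 c0 = T r0 c0 + 1" "T r0 c0 = i"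
    "\<forall>(r', c') \<in> skew_cells m P Q. (r', c') \<noteq> (r0, c0) \<longrightarrow> S r' c' = T r' c'"
    using assms(7) unfolding skew_edge_def by blast
  define I where "I = int i"
  define s where "s = nat (I + 1 - j)"
  define H where "H = HH m P Q T"
  have ES: "\<And>r a. HH m P Q S r a = (if r = r0 \<and> a = I then H r a - 1 else H r a)"
    using edge_HH[OF e] by (simp add: H_def I_def)
  have jC: "I - (int m - 1) \<le> j" "j \<le> I" using assms(8) by (auto simp: Cset_def I_def)
  have s1: "1 \<le> s" "s \<le> m" and js: "j = I + 1 - int s" using jC by (auto simp: s_def)
  have sr0: "s = r0"
  proof (rule ccontr)
    assume "s \<noteq> r0"
    hence "gt m P Q T I j = gt m P Q S I j" using ES by (simp add: gt_HH H_def s_def)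
    thus False using assms(9) by (simp add: I_def)
  qed
  have ESs: "HH m P Q S s I = H s I - 1" using ES sr0 by simp
  have ESo: "\<And>r a. a \<noteq> I \<Longrightarrow> HH m P Q S r a = H r a" using ES by simp
  have ESr: "\<And>r a. r \<noteq> s \<Longrightarrow> HH m P Q S r a = H r a" using ES sr0 by simp
  have TA: "\<And>a r r'. 1 \<le> r \<Longrightarrow> r \<le> r' \<Longrightarrow> r' \<le> m \<Longrightarrow> H r' a \<le> H r a"
    unfolding H_def by (rule HH_anti[OF stT wP wQ])
  have SA: "\<And>a r r'. 1 \<le> r \<Longrightarrow> r \<le> r' \<Longrightarrow> r' \<le> m \<Longrightarrow> HH m P Q S r' a \<le> HH m P Q S r a"
    by (rule HH_anti[OF stS wP wQ])
  have TS: "\<And>a r. 1 \<le> r \<Longrightarrow> r + 1 \<le> m \<Longrightarrow> H (r + 1) (a + 1) \<le> H r a"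
    unfolding H_def by (rule HH_step[OF stT wP wQ])
  have SS: "\<And>a r. 1 \<le> r \<Longrightarrow> r + 1 \<le> m \<Longrightarrow> HH m P Q S (r + 1) (a + 1) \<le> HH m P Q S r a"
    by (rule HH_step[OF stS wP wQ])
  have TM: "\<And>a r. H r a \<le> H r (a + 1)" unfolding H_def by (rule HH_mono)
  have SM: "\<And>a r. HH m P Q S r a \<le> HH m P Q S r (a + 1)" by (rule HH_mono)
  have gtH: "\<And>a k. gt m P Q T a k = H (nat (a + 1 - k)) a" by (simp add: gt_HH H_def)
  have xs: "gt m P Q T I j = H s I" by (simp add: gtH s_def)
  have ns: "nat (int s - 1) = s - 1" by simp

  define fXn where "fXn k = gt m P Q T I j - gt m P Q T (I + 1) k + j - k" for k
  have fXn: "fXn k \<noteq> 0 \<and> (fXn k < 0 \<longleftrightarrow> j + 1 \<le> k)" if k: "k \<in> Cset m (I + 1)" for k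
  proof -
    define r where "r = nat (I + 2 - k)"
    have r: "1 \<le> r" "r \<le> m" "k = I + 2 - int r" using k by (auto simp: Cset_def r_def)
    have v: "fXn k = H s I - H r (I + 1) + int r - int s - 1"
      using r js by (simp add: fXn_def xs gtH)
    show ?thesis
    proof (cases "r \<le> s")
      case True
      have "H s I \<le> H r I" using TA[OF r(1) True s1(2)] .
      moreover have "H r I \<le> H r (I + 1)" by (rule TM)
      ultimately show ?thesis using v True r js by auto
    next
      case False
      obtain q where q: "r = q + 1" using r(1) by (cases r) auto
      have "H r (I + 1) = HH m P Q S r (I + 1)" using ESo by simp
      also have "\<dots> \<le> HH m P Q S q I" using SS[of q I] q r False s1 by simp
      also have "\<dots> \<le> HH m P Q S s I" using SA[OF s1(1), of q I] q r False by simp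
      finally have "H r (I + 1) \<le> H s I - 1" using ESs by simp
      thus ?thesis using v False r js by auto
    qed
  qed
  have cXn: "{k \<in> Cset m (I + 1). fXn k < 0} = {j + 1 .. I + 1}"
    using fXn jC by (auto simp: Cset_def)
  have sXn: "sgn (\<Prod>k\<in>Cset m (I + 1). fXn k) = (-1) ^ s"
    using prod_sgn[of "Cset m (I + 1)" fXn] fXn cXn js by (simp add: Cset_def)
  have Xn: "Xnum m P Q T I j = of_int (\<Prod>k\<in>Cset m (I + 1). fXn k)"
    by (simp add: Xnum_def fXn_def)

  define fXd where "fXd k = gt m P Q T I j - gt m P Q T I k + j - k - 1" for k
  have fXd: "fXd k \<noteq> 0 \<and> (fXd k < 0 \<longleftrightarrow> j + 1 \<le> k)" if k: "k \<in> Cset m I - {j}" for k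
  proof -
    define r where "r = nat (I + 1 - k)"
    have r: "1 \<le> r" "r \<le> m" "k = I + 1 - int r" "r \<noteq> s" using k js by (auto simp: Cset_def r_def)
    have v: "fXd k = H s I - H r I + int r - int s - 1"
      using r js by (simp add: fXd_def xs gtH)
    show ?thesis
    proof (cases "r < s")
      case True
      have "H s I \<le> H r I" using TA[OF r(1) _ s1(2)] True by simp
      thus ?thesis using v True r js by auto
    next
      case False
      have "H r I = HH m P Q S r I" using ESr r by simp
      also have "\<dots> \<le> HH m P Q S s I" using SA[OF s1(1), of r I] r False by simp
      finally have "H r I \<le> H s I - 1" using ESs by simp
      thus ?thesis using v False r js by auto
    qed
  qed
  have cXd: "{k \<in> Cset m I - {j}. fXd k < 0} = {j + 1 .. I}"
    using fXd jC by (auto simp: Cset_def)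
  have sXd: "sgn (\<Prod>k\<in>Cset m I - {j}. fXd k) = (-1) ^ (s - 1)"
    using prod_sgn[of "Cset m I - {j}" fXd] fXd cXd js ns by (simp add: Cset_def)
  have Xd: "Xden m P Q T I j = of_int (\<Prod>k\<in>Cset m I - {j}. fXd k)"
    by (simp add: Xden_def fXd_def)

  define fYn where "fYn k = gt m P Q T I j - gt m P Q T (I - 1) k + j - k - 1" for k
  have fYn: "fYn k \<noteq> 0 \<and> (fYn k < 0 \<longleftrightarrow> j \<le> k)" if k: "k \<in> Cset m (I - 1)" for k
  proof -
    define r where "r = nat (I - k)"
    have r: "1 \<le> r" "r \<le> m" "k = I - int r" using k by (auto simp: Cset_def r_def)
    have v: "fYn k = H s I - H r (I - 1) + int r - int s"
      using r js by (simp add: fYn_def xs gtH)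
    show ?thesis
    proof (cases "r < s")
      case True
      have "H (r + 1) (I - 1 + 1) \<le> H r (I - 1)" using TS[OF r(1), of "I - 1"] True s1 by simp
      moreover have "H s I \<le> H (r + 1) I" using TA[of "r + 1" s I] True s1 by simp
      ultimately have "H s I \<le> H r (I - 1)" by simp
      thus ?thesis using v True r js by auto
    next
      case False
      show ?thesis
      proof (cases "r = s")
        case True
        have "H s (I - 1) = HH m P Q S s (I - 1)" using ESo by simp
        also have "\<dots> \<le> HH m P Q S s (I - 1 + 1)" by (rule SM)
        finally have "H s (I - 1) \<le> H s I - 1" using ESs by simp
        thus ?thesis using v True r js by auto
      next
        case False2: False
        have "H r (I - 1) \<le> H r (I - 1 + 1)" by (rule TM)
        moreover have "H r I \<le> H s I" using TA[OF s1(1), of r I] r False by simp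
        ultimately have "H r (I - 1) \<le> H s I" by simp
        thus ?thesis using v False False2 r js by auto
      qed
    qed
  qed
  have cYn: "{k \<in> Cset m (I - 1). fYn k < 0} = {j .. I - 1}"
    using fYn jC by (auto simp: Cset_def)
  have sYn: "sgn (\<Prod>k\<in>Cset m (I - 1). fYn k) = (-1) ^ (s - 1)"
    using prod_sgn[of "Cset m (I - 1)" fYn] fYn cYn js ns by (simp add: Cset_def)
  have Yn: "Ynum m P Q T I j = of_int (\<Prod>k\<in>Cset m (I - 1). fYn k)"
    by (simp add: Ynum_def fYn_def)

  define fYd where "fYd k = gt m P Q T I j - gt m P Q T I k + j - k" for k
  have fYd: "fYd k \<noteq> 0 \<and> (fYd k < 0 \<longleftrightarrow> j + 1 \<le> k)" if k: "k \<in> Cset m I - {j}" for k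
  proof -
    define r where "r = nat (I + 1 - k)"
    have r: "1 \<le> r" "r \<le> m" "k = I + 1 - int r" "r \<noteq> s" using k js by (auto simp: Cset_def r_def)
    have v: "fYd k = H s I - H r I + int r - int s"
      using r js by (simp add: fYd_def xs gtH)
    show ?thesis
    proof (cases "r < s")
      case True
      have "H s I \<le> H r I" using TA[OF r(1) _ s1(2)] True by simp
      thus ?thesis using v True r js by auto
    next
      case False
      have "H r I \<le> H s I" using TA[OF s1(1), of r I] r False by simp
      thus ?thesis using v False r js by auto
    qed
  qed
  have cYd: "{k \<in> Cset m I - {j}. fYd k < 0} = {j + 1 .. I}"
    using fYd jC by (auto simp: Cset_def)
  have sYd: "sgn (\<Prod>k\<in>Cset m I - {j}. fYd k) = (-1) ^ (s - 1)"
    using prod_sgn[of "Cset m I - {j}" fYd] fYd cYd js ns by (simp add: Cset_def)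
  have Yd: "Yden m P Q T I j = of_int (\<Prod>k\<in>Cset m I - {j}. fYd k)"
    by (simp add: Yden_def fYd_def)

  have finC: "\<And>a. finite (Cset m a)" by (simp add: Cset_def)
  have nzXd: "(\<Prod>k\<in>Cset m I - {j}. fXd k) \<noteq> 0" using fXd finC by (simp add: prod_zero_iff)
  have nzYd: "(\<Prod>k\<in>Cset m I - {j}. fYd k) \<noteq> 0" using fYd finC by (simp add: prod_zero_iff)
  obtain t where t: "s = Suc t" using s1 by (cases s) auto
  have X: "Xcoef m P Q T I j > 0"
    unfolding Xcoef_def Xn Xd
    by (rule negdiv_pos[OF _ nzXd]) (simp add: sXn sXd t)
  have Y: "Ycoef m P Q T I j > 0"
    unfolding Ycoef_def Yn Yd
    by (rule div_pos[OF _ nzYd]) (simp add: sYn sYd)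
  have "Xden m P Q T I j \<noteq> 0" unfolding Xd using nzXd by (metis of_int_eq_0_iff)
  moreover have "Yden m P Q T I j \<noteq> 0" unfolding Yd using nzYd by (metis of_int_eq_0_iff)
  ultimately show ?thesis using X Y by (simp add: I_def)
qed

end
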